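(* Let $R$ be a commutative ring, $I$ an ideal of $R$ and $n\ge 3$. Let $\varepsilon=\varepsilon_1\cdots\varepsilon_r\in\mathrm{EO}^1_{2n}(R,I)$ where each $\varepsilon_k$ is one of the generators $oe_{1i}(a)$ ($a\in R$, $3\le i\le 2n$) or $oe_{j1}(x)$ ($x\in I$, $3\le j\le 2n$). Let $oe_{ij}(Xf(X))$ be a generator of $\mathrm{EO}^1_{2n}(R[X],I[X])$, i.e. either $i=1$, $3\le j\le 2n$ and $f(X)\in R[X]$, or $j=1$, $3\le i\le 2n$ and $f(X)\in I[X]$. Then in $\mathrm{EO}_{2n}(R[X,Y])$ $$\varepsilon\, oe_{ij}\big(Y^{4^r}Xf(Y^{4^r}X)\big)\,\varepsilon^{-1}=\prod_{t=1}^s oe_{i_tj_t}\big(Yh_t(X,Y)\big)$$ for some $s$, where for each $t$ either $i_t=1$ and $h_t(X,Y)\in R[X,Y]$, or $j_t=1$ and $h_t(X,Y)\in I[X,Y]$.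
   Context: Let $\sigma$ be the permutation of $\{1,\dots,2n\}$ with $\sigma(2i)=2i-1$, $\sigma(2i-1)=2i$. For a commutative ring $A$, $z\in A$ and $1\le i\ne j\le 2n$ with $i\ne\sigma(j)$, $oe_{ij}(z)=1_{2n}+z e_{ij}-z e_{\sigma(j)\sigma(i)}$ (these are orthogonal with respect to $\widetilde\psi_n=\sum_{i=1}^n(e_{2i-1,2i}+e_{2i,2i-1})$), and $\mathrm{EO}_{2n}(A)$ is the group they generate. For an ideal $J$ of $A$, $\mathrm{EO}^1_{2n}(A,J)$ is the subgroup of $\mathrm{EO}_{2n}(A)$ generated by $oe_{1i}(a)$, $oe_{j1}(x)$ with $a\in A$, $x\in J$, $3\le i,j\le 2n$. $I[X]=IR[X]$, $I[X,Y]=IR[X,Y]$. *)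

theory Defs
  imports "Jordan_Normal_Form.Matrix" "HOL-Computational_Algebra.Polynomial"
begin

(* Matrices of size 2n are Jordan_Normal_Form matrices; the paper's 1-based
   index i (1 \<le> i \<le> 2n) corresponds to the 0-based index i - 1. *)

definition sigma :: "nat \<Rightarrow> nat" where
  "sigma k = (if even k then k - 1 else k + 1)"

definition eunit :: "nat \<Rightarrow> nat \<Rightarrow> nat \<Rightarrow> 'a::comm_ring_1 mat" where
  "eunit n i j = mat (2*n) (2*n) (\<lambda>(a,b). if a + 1 = i \<and> b + 1 = j then 1 else 0)"

definition oe :: "nat \<Rightarrow> nat \<Rightarrow> nat \<Rightarrow> 'a::comm_ring_1 \<Rightarrow> 'a mat" where
  "oe n i j z = 1\<^sub>m (2*n) + z \<cdot>\<^sub>m eunit n i j - z \<cdot>\<^sub>m eunit n (sigma j) (sigma i)"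

definition oe_idx :: "nat \<Rightarrow> nat \<Rightarrow> nat \<Rightarrow> bool" where
  "oe_idx n i j \<longleftrightarrow> 1 \<le> i \<and> i \<le> 2*n \<and> 1 \<le> j \<and> j \<le> 2*n \<and> i \<noteq> j \<and> i \<noteq> sigma j"

definition mat_list_prod :: "nat \<Rightarrow> 'a::comm_ring_1 mat list \<Rightarrow> 'a mat" where
  "mat_list_prod n Ms = foldr (\<lambda>A B. A * B) Ms (1\<^sub>m (2*n))"

definition is_ideal :: "'a::comm_ring_1 set \<Rightarrow> bool" where
  "is_ideal I \<longleftrightarrow> 0 \<in> I \<and> (\<forall>x\<in>I. \<forall>y\<in>I. x + y \<in> I) \<and> (\<forall>a x. x \<in> I \<longrightarrow> a * x \<in> I)"

definition EO1_gen :: "nat \<Rightarrow> 'a::comm_ring_1 set \<Rightarrow> nat \<times> nat \<times> 'a \<Rightarrow> bool" where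
  "EO1_gen n J g = (case g of (i, j, z) \<Rightarrow>
      (i = 1 \<and> 3 \<le> j \<and> j \<le> 2*n) \<or> (j = 1 \<and> 3 \<le> i \<and> i \<le> 2*n \<and> z \<in> J))"

(* R[X,Y] is rendered as ('a poly) poly: inner variable X, outer variable Y *)
definition varX :: "'a::comm_ring_1 poly poly" where "varX = [:[:0, 1:]:]"
definition varY :: "'a::comm_ring_1 poly poly" where "varY = [:0, 1:]"
definition constXY :: "'a::comm_ring_1 \<Rightarrow> 'a poly poly" where "constXY c = [:[:c:]:]"

definition poly_ideal1 :: "'a::comm_ring_1 set \<Rightarrow> 'a poly set" where
  "poly_ideal1 I = {f. \<forall>k. coeff f k \<in> I}"

definition poly_ideal2 :: "'a::comm_ring_1 set \<Rightarrow> 'a poly poly set" where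
  "poly_ideal2 I = {h. \<forall>k l. coeff (coeff h k) l \<in> I}"

definition subst_XY :: "'a::comm_ring_1 poly \<Rightarrow> 'a poly poly \<Rightarrow> 'a poly poly" where
  "subst_XY f t = poly (map_poly constXY f) t"

end

theory Submission imports Defs begin

lemma sigma_range: "1 \<le> k \<Longrightarrow> k \<le> 2*n \<Longrightarrow> 1 \<le> sigma k \<and> sigma k \<le> 2*n"
  unfolding sigma_def by (auto, presburger)

lemma sigma_sigma[simp]: "1 \<le> k \<Longrightarrow> sigma (sigma k) = k"
  unfolding sigma_def by auto

lemma sigma_neq[simp]: "1 \<le> k \<Longrightarrow> sigma k \<noteq> k"
  unfolding sigma_def by (cases k) auto

lemma sigma_inj: "1 \<le> a \<Longrightarrow> 1 \<le> b \<Longrightarrow> sigma a = sigma b \<Longrightarrow> a = b"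
  by (metis sigma_sigma)

lemma sigma_eq_iff[simp]: "1 \<le> a \<Longrightarrow> 1 \<le> b \<Longrightarrow> (sigma a = sigma b) = (a = b)"
  using sigma_inj by blast

lemma sigma_neq'[simp]: "1 \<le> k \<Longrightarrow> k \<noteq> sigma k"
  using sigma_neq by metis

lemma sigma_sym: "1 \<le> k \<Longrightarrow> 1 \<le> q \<Longrightarrow> (k = sigma q) = (q = sigma k)"
  by (metis sigma_sigma)

lemma sigma_sym2: "1 \<le> k \<Longrightarrow> 1 \<le> q \<Longrightarrow> (sigma q = k) = (q = sigma k)"
  by (metis sigma_sigma)

lemma sigma_Suc0[simp]: "sigma (Suc 0) = 2"
  unfolding sigma_def by auto

lemma sigma_1[simp]: "sigma 1 = 2" and sigma_2[simp]: "sigma 2 = 1"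
  unfolding sigma_def by auto

lemma sigma_ge3: "3 \<le> k \<Longrightarrow> 3 \<le> sigma k"
  unfolding sigma_def by auto presburger

lemma oe_carrier[simp]: "oe n i j z \<in> carrier_mat (2*n) (2*n)"
  unfolding oe_def eunit_def by auto

lemma oe_dims[simp]: "dim_row (oe n i j z) = 2*n" "dim_col (oe n i j z) = 2*n"
  unfolding oe_def eunit_def by auto

lemma oe_entry: "x < 2*n \<Longrightarrow> y < 2*n \<Longrightarrow> oe n i j z $$ (x,y) =
   (if x = y then 1 else 0) + (if x+1 = i \<and> y+1 = j then z else 0)
   - (if x+1 = sigma j \<and> y+1 = sigma i then z else 0)"
  unfolding oe_def eunit_def by (simp add: if_distrib[where f="\<lambda>a. z * a"] cong: if_cong)

lemma eunit_carrier[simp]: "eunit n i j \<in> carrier_mat (2*n) (2*n)"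
  unfolding eunit_def by auto
lemma eunit_dims[simp]: "dim_row (eunit n i j) = 2*n" "dim_col (eunit n i j) = 2*n"
  unfolding eunit_def by auto

lemma eunit_mult_entry:
  assumes M: "M \<in> carrier_mat (2*n) (2*n)" and x: "x < 2*n" and y: "y < 2*n"
    and j: "1 \<le> j" "j \<le> 2*n"
  shows "(eunit n i j * M) $$ (x,y) = (if x+1 = i then M $$ (j-1,y) else 0)"
proof -
  have "(eunit n i j * M) $$ (x,y) = (\<Sum>k\<in>{0..<2*n}. eunit n i j $$ (x,k) * M $$ (k,y))"
    using M x y by (simp add: scalar_prod_def eunit_def)
  also have "\<dots> = (\<Sum>k\<in>{0..<2*n}. if k = j - 1 then (if x+1 = i then M $$ (k,y) else 0) else 0)"
    apply (rule sum.cong, rule refl)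
    using x j by (auto simp: eunit_def)
  also have "\<dots> = (if x+1 = i then M $$ (j-1,y) else 0)"
    using j by (subst sum.delta) auto
  finally show ?thesis .
qed


lemma rowop: 
  fixes z :: "'a::comm_ring_1"
  assumes M: "M \<in> carrier_mat (2*n) (2*n)" and x: "x < 2*n" and y: "y < 2*n"
    and ij: "1 \<le> i" "i \<le> 2*n" "1 \<le> j" "j \<le> 2*n"
  shows "(oe n i j z * M) $$ (x,y) = M $$ (x,y) + (if x+1 = i then z * M $$ (j-1,y) else 0)
     - (if x+1 = sigma j then z * M $$ (sigma i - 1, y) else 0)"
proof -
  have si: "1 \<le> sigma i" "sigma i \<le> 2*n" using sigma_range[of i n] ij by auto
  let ?A = "eunit n i j :: 'a mat" and ?B = "eunit n (sigma j) (sigma i) :: 'a mat"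
  have c: "1\<^sub>m (2*n) \<in> carrier_mat (2*n) (2*n)" "z \<cdot>\<^sub>m ?A \<in> carrier_mat (2*n) (2*n)"
     "z \<cdot>\<^sub>m ?B \<in> carrier_mat (2*n) (2*n)" by simp_all
  have "oe n i j z * M = (1\<^sub>m (2*n) + z \<cdot>\<^sub>m ?A) * M - (z \<cdot>\<^sub>m ?B) * M"
    unfolding oe_def by (rule minus_mult_distrib_mat[OF _ c(3) M]) (use c in simp)
  also have "(1\<^sub>m (2*n) + z \<cdot>\<^sub>m ?A) * M = 1\<^sub>m (2*n) * M + (z \<cdot>\<^sub>m ?A) * M"
    by (rule add_mult_distrib_mat[OF c(1,2) M])
  finally have e: "oe n i j z * M = M + z \<cdot>\<^sub>m (?A * M) - z \<cdot>\<^sub>m (?B * M)"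
    using M by (simp add: mult_smult_assoc_mat[of _ "2*n" "2*n" M "2*n"])
  have "(oe n i j z * M) $$ (x,y) = M $$ (x,y) + z * (?A * M) $$ (x,y) - z * (?B * M) $$ (x,y)"
    unfolding e using M x y by simp
  also have "\<dots> = M $$ (x,y) + (if x+1 = i then z * M $$ (j-1,y) else 0)
     - (if x+1 = sigma j then z * M $$ (sigma i - 1, y) else 0)"
    using eunit_mult_entry[OF M x y, of j i] eunit_mult_entry[OF M x y, of "sigma i" "sigma j"] ij si
    by simp
  finally show ?thesis .
qed

definition pairs_ok :: "nat \<Rightarrow> nat \<Rightarrow> nat \<Rightarrow> bool" where
  "pairs_ok n a b \<longleftrightarrow> 1 \<le> a \<and> a \<le> 2*n \<and> 1 \<le> b \<and> b \<le> 2*n \<and> a \<noteq> b \<and> a \<noteq> sigma b"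

lemma pairs_okD:
  assumes "pairs_ok n a b"
  shows "1 \<le> a" "a \<le> 2*n" "1 \<le> b" "b \<le> 2*n" "a \<noteq> b" "a \<noteq> sigma b" "sigma a \<noteq> b"
    "sigma a \<noteq> sigma b" "1 \<le> sigma a" "sigma a \<le> 2*n" "1 \<le> sigma b" "sigma b \<le> 2*n"
    "b \<noteq> a" "sigma b \<noteq> a" "b \<noteq> sigma a" "sigma b \<noteq> sigma a"
proof -
  have a: "1 \<le> a" "a \<le> 2*n" "1 \<le> b" "b \<le> 2*n" "a \<noteq> b" "a \<noteq> sigma b"
    using assms unfolding pairs_ok_def by auto
  have r: "1 \<le> sigma a" "sigma a \<le> 2*n" "1 \<le> sigma b" "sigma b \<le> 2*n"
    using sigma_range[of a n] sigma_range[of b n] a by auto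
  have b: "sigma a \<noteq> b" using a sigma_sigma[of a] by metis
  have c: "sigma a \<noteq> sigma b" using a sigma_inj[of a b] by blast
  show "1 \<le> a" "a \<le> 2*n" "1 \<le> b" "b \<le> 2*n" "a \<noteq> b" "a \<noteq> sigma b" "sigma a \<noteq> b"
    "sigma a \<noteq> sigma b" "1 \<le> sigma a" "sigma a \<le> 2*n" "1 \<le> sigma b" "sigma b \<le> 2*n"
    "b \<noteq> a" "sigma b \<noteq> a" "b \<noteq> sigma a" "sigma b \<noteq> sigma a"
    using a b c r by auto
qed

definition ent :: "'a mat \<Rightarrow> nat \<Rightarrow> nat \<Rightarrow> 'a" where
  "ent M a b = M $$ (a - 1, b - 1)"

lemma ent_oe:
  assumes "1 \<le> a" "a \<le> 2*n" "1 \<le> b" "b \<le> 2*n"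
  shows "ent (oe n i j z) a b = (if a = b then 1 else 0) + (if a = i \<and> b = j then z else 0)
   - (if a = sigma j \<and> b = sigma i then z else 0)"
proof -
  have "a - 1 + 1 = a" "b - 1 + 1 = b" using assms by auto
  then show ?thesis using assms unfolding ent_def
    by (subst oe_entry) (auto simp del: Suc_eq_plus1 simp: Suc_eq_plus1[symmetric])
qed

lemma ent_rowop:
  fixes z :: "'a::comm_ring_1"
  assumes M: "M \<in> carrier_mat (2*n) (2*n)" and "1 \<le> a" "a \<le> 2*n" "1 \<le> b" "b \<le> 2*n"
    and ij: "1 \<le> i" "i \<le> 2*n" "1 \<le> j" "j \<le> 2*n"
  shows "ent (oe n i j z * M) a b = ent M a b + (if a = i then z * ent M j b else 0)
     - (if a = sigma j then z * ent M (sigma i) b else 0)"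
proof -
  have "a - 1 + 1 = a" using assms by auto
  then show ?thesis using assms unfolding ent_def
    by (subst rowop[OF M]) (auto simp del: Suc_eq_plus1 simp: Suc_eq_plus1[symmetric])
qed

lemma mat_eq_ent:
  assumes "A \<in> carrier_mat (2*n) (2*n)" "B \<in> carrier_mat (2*n) (2*n)"
    and "\<And>a b. 1 \<le> a \<Longrightarrow> a \<le> 2*n \<Longrightarrow> 1 \<le> b \<Longrightarrow> b \<le> 2*n \<Longrightarrow> ent A a b = ent B a b"
  shows "A = B"
proof (rule eq_matI)
  fix x y assume "x < dim_row B" "y < dim_col B"
  then have "x < 2*n" "y < 2*n" using assms by auto
  then show "A $$ (x,y) = B $$ (x,y)" using assms(3)[of "x+1" "y+1"] unfolding ent_def by auto
qed (use assms in auto)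

lemma oe_mult_carrier[simp]: "M \<in> carrier_mat (2*n) (2*n) \<Longrightarrow> oe n a b s * M \<in> carrier_mat (2*n) (2*n)"
  by (rule mult_carrier_mat[OF oe_carrier])

lemma oe_assoc: "B \<in> carrier_mat (2*n) (2*n) \<Longrightarrow> C \<in> carrier_mat (2*n) (2*n) \<Longrightarrow>
   oe n a b s * B * C = oe n a b s * (B * C)"
  by (rule assoc_mult_mat[OF oe_carrier]) auto

lemma ent_one: "1 \<le> a \<Longrightarrow> a \<le> 2*n \<Longrightarrow> 1 \<le> b \<Longrightarrow> b \<le> 2*n \<Longrightarrow>
   ent (1\<^sub>m (2*n)) a b = (if a = b then 1 else 0)"
  unfolding ent_def by auto

definition idx :: "nat \<Rightarrow> nat \<Rightarrow> bool" where "idx n a \<longleftrightarrow> 1 \<le> a \<and> a \<le> 2*n"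

lemma ent_oe':
  "idx n a \<Longrightarrow> idx n b \<Longrightarrow> ent (oe n i j z) a b = (if a = b then 1 else 0) + (if a = i \<and> b = j then z else 0)
   - (if a = sigma j \<and> b = sigma i then z else 0)"
  unfolding idx_def by (intro ent_oe) auto

lemma ent_rowop':
  fixes z :: "'a::comm_ring_1"
  shows "M \<in> carrier_mat (2*n) (2*n) \<Longrightarrow> idx n a \<Longrightarrow> idx n b \<Longrightarrow> idx n i \<Longrightarrow> idx n j \<Longrightarrow>
   ent (oe n i j z * M) a b = ent M a b + (if a = i then z * ent M j b else 0)
     - (if a = sigma j then z * ent M (sigma i) b else 0)"
  unfolding idx_def by (rule ent_rowop) auto

lemma ent_one': "idx n a \<Longrightarrow> idx n b \<Longrightarrow> ent (1\<^sub>m (2*n)) a b = (if a = b then 1 else 0)"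
  unfolding idx_def by (rule ent_one) auto

lemma mat_eq_ent':
  assumes "A \<in> carrier_mat (2*n) (2*n)" "B \<in> carrier_mat (2*n) (2*n)"
    and "\<And>a b. idx n a \<Longrightarrow> idx n b \<Longrightarrow> ent A a b = ent B a b"
  shows "A = B"
  using assms unfolding idx_def by (intro mat_eq_ent[of A n B]) auto

lemma pairs_ok_idx:
  assumes "pairs_ok n a b"
  shows "idx n a" "idx n b" "idx n (sigma a)" "idx n (sigma b)" "1 \<le> a" "1 \<le> b"
    "1 \<le> sigma a" "1 \<le> sigma b"
    "a \<noteq> b" "a \<noteq> sigma b" "sigma a \<noteq> b"
    "sigma a \<noteq> sigma b"  "b \<noteq> a" "sigma b \<noteq> a" "b \<noteq> sigma a" "sigma b \<noteq> sigma a"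
  using pairs_okD[OF assms] unfolding idx_def by auto

lemma idx_ge1: "idx n a \<Longrightarrow> 1 \<le> a" unfolding idx_def by auto

lemma six_cases:
  "(x = pa \<Longrightarrow> P) \<Longrightarrow> (x = pb \<Longrightarrow> P) \<Longrightarrow> (x = pc \<Longrightarrow> P) \<Longrightarrow> (x = pd \<Longrightarrow> P) \<Longrightarrow>
   (x = pe \<Longrightarrow> P) \<Longrightarrow> (x = pf \<Longrightarrow> P) \<Longrightarrow>
   (x \<noteq> pa \<Longrightarrow> x \<noteq> pb \<Longrightarrow> x \<noteq> pc \<Longrightarrow> x \<noteq> pd \<Longrightarrow> x \<noteq> pe \<Longrightarrow> x \<noteq> pf \<Longrightarrow> P) \<Longrightarrow> P"
  by blast


lemma oe_chev:
  fixes s t :: "'a::comm_ring_1"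
  assumes ij: "pairs_ok n i j" and jm: "pairs_ok n j m" and im: "pairs_ok n i m"
  shows "oe n i j s * oe n j m t * oe n i j (-s) = oe n j m t * oe n i m (s*t)"
  using pairs_ok_idx[OF ij] pairs_ok_idx[OF jm] pairs_ok_idx[OF im]
  using [[linarith_neq_limit=0]]
  apply (simp add: oe_assoc)
  apply (rule mat_eq_ent'[where n=n], simp, simp)
  apply (simp add: ent_rowop' ent_oe' ent_one' idx_ge1)
  done

lemma oe_chev2:
  fixes s t :: "'a::comm_ring_1"
  assumes ij: "pairs_ok n i j" and jm: "pairs_ok n j m" and im: "pairs_ok n i m"
  shows "oe n j m t * oe n i j s * oe n j m (-t) = oe n i j s * oe n i m (-(s*t))"
  using pairs_ok_idx[OF ij] pairs_ok_idx[OF jm] pairs_ok_idx[OF im]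
  using [[linarith_neq_limit=0]]
  apply (simp add: oe_assoc)
  apply (rule mat_eq_ent'[where n=n], simp, simp)
  apply (simp add: ent_rowop' ent_oe' ent_one' idx_ge1)
  done

lemma oe_comm_lem:
  fixes s t :: "'a::comm_ring_1"
  assumes ij: "pairs_ok n i j" and jm: "pairs_ok n j m" and im: "pairs_ok n i m"
  shows "oe n i j s * oe n j m t * oe n i j (-s) * oe n j m (-t) = oe n i m (s*t)"
  using pairs_ok_idx[OF ij] pairs_ok_idx[OF jm] pairs_ok_idx[OF im]
  using [[linarith_neq_limit=0]]
  apply (simp add: oe_assoc)
  apply (rule mat_eq_ent'[where n=n], simp, simp)
  apply (simp add: ent_rowop' ent_oe' ent_one' idx_ge1)
  done

lemma oe_inv:
  fixes s t :: "'a::comm_ring_1"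
  assumes ij: "pairs_ok n i j"
  shows "oe n i j s * oe n i j (-s) = 1\<^sub>m (2*n)"
  using pairs_ok_idx[OF ij]
  using [[linarith_neq_limit=0]]
  apply (simp add: oe_assoc)
  apply (rule mat_eq_ent'[where n=n], simp, simp)
  apply (simp add: ent_rowop' ent_oe' ent_one' idx_ge1)
  done

lemma oe_add:
  fixes s t :: "'a::comm_ring_1"
  assumes ij: "pairs_ok n i j"
  shows "oe n i j s * oe n i j t = oe n i j (s+t)"
  using pairs_ok_idx[OF ij]
  using [[linarith_neq_limit=0]]
  apply (simp add: oe_assoc)
  apply (rule mat_eq_ent'[where n=n], simp, simp)
  apply (simp add: ent_rowop' ent_oe' ent_one' idx_ge1)
  done

lemma comm_c1:
  fixes s t :: "'a::comm_ring_1"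
  assumes a: "pairs_ok n 1 k" and b: "pairs_ok n 1 q"
  shows "oe n 1 k s * oe n 1 q t * oe n 1 k (-s) = oe n 1 q t"
  using pairs_ok_idx[OF a] pairs_ok_idx[OF b]
  using [[linarith_neq_limit=0]]
  apply (simp add: oe_assoc)
  apply (rule mat_eq_ent'[where n=n], simp, simp)
  apply (cases "q = sigma k")
  apply (simp_all add: ent_rowop' ent_oe' ent_one' idx_ge1 sigma_sym[of k q] sigma_sym2[of k q])
  done

lemma comm_c2:
  fixes s t :: "'a::comm_ring_1"
  assumes a: "pairs_ok n k 1" and b: "pairs_ok n q 1"
  shows "oe n k 1 s * oe n q 1 t * oe n k 1 (-s) = oe n q 1 t"
  using pairs_ok_idx[OF a] pairs_ok_idx[OF b]
  using [[linarith_neq_limit=0]]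
  apply (simp add: oe_assoc)
  apply (rule mat_eq_ent'[where n=n], simp, simp)
  apply (cases "q = sigma k")
  apply (simp_all add: ent_rowop' ent_oe' ent_one' idx_ge1 sigma_sym[of k q] sigma_sym2[of k q])
  done

lemma comm_c3:
  fixes s t :: "'a::comm_ring_1"
  assumes a: "pairs_ok n 1 k" and b: "pairs_ok n (sigma k) 1"
  shows "oe n 1 k s * oe n (sigma k) 1 t * oe n 1 k (-s) = oe n (sigma k) 1 t"
  using pairs_ok_idx[OF a] pairs_ok_idx[OF b] sigma_sigma[of k]
  using [[linarith_neq_limit=0]]
  apply (simp add: oe_assoc)
  apply (rule mat_eq_ent'[where n=n], simp, simp)
  apply (simp add: ent_rowop' ent_oe' ent_one' idx_ge1)
  done

lemma comm_c3b:
  fixes s t :: "'a::comm_ring_1"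
  assumes a: "pairs_ok n 1 k" and b: "pairs_ok n (sigma k) 1"
  shows "oe n (sigma k) 1 t * oe n 1 k s * oe n (sigma k) 1 (-t) = oe n 1 k s"
  using pairs_ok_idx[OF a] pairs_ok_idx[OF b] sigma_sigma[of k]
  using [[linarith_neq_limit=0]]
  apply (simp add: oe_assoc)
  apply (rule mat_eq_ent'[where n=n], simp, simp)
  apply (simp add: ent_rowop' ent_oe' ent_one' idx_ge1)
  done

lemma comm_c4:
  fixes s t :: "'a::comm_ring_1"
  assumes a: "pairs_ok n k l" and b: "pairs_ok n 1 l" and c: "pairs_ok n 1 k"
  shows "oe n k l s * oe n 1 l t * oe n k l (-s) = oe n 1 l t"
  using pairs_ok_idx[OF a] pairs_ok_idx[OF b] pairs_ok_idx[OF c]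
  using [[linarith_neq_limit=0]]
  apply (simp add: oe_assoc)
  apply (rule mat_eq_ent'[where n=n], simp, simp)
  apply (simp add: ent_rowop' ent_oe' ent_one' idx_ge1)
  done

lemma comm_c5:
  fixes s t :: "'a::comm_ring_1"
  assumes a: "pairs_ok n l k" and b: "pairs_ok n l 1" and c: "pairs_ok n k 1"
  shows "oe n l k s * oe n l 1 t * oe n l k (-s) = oe n l 1 t"
  using pairs_ok_idx[OF a] pairs_ok_idx[OF b] pairs_ok_idx[OF c]
  using [[linarith_neq_limit=0]]
  apply (simp add: oe_assoc)
  apply (rule mat_eq_ent'[where n=n], simp, simp)
  apply (simp add: ent_rowop' ent_oe' ent_one' idx_ge1)
  done

lemma comm_c6:
  fixes s t :: "'a::comm_ring_1"
  assumes a: "pairs_ok n l k" and b: "pairs_ok n 1 k" and c: "pairs_ok n 1 l"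
  shows "oe n l k s * oe n 1 k t * oe n l k (-s) = oe n 1 k t"
  using pairs_ok_idx[OF a] pairs_ok_idx[OF b] pairs_ok_idx[OF c]
  using [[linarith_neq_limit=0]]
  apply (simp add: oe_assoc)
  apply (rule mat_eq_ent'[where n=n], simp, simp)
  apply (simp add: ent_rowop' ent_oe' ent_one' idx_ge1)
  done

lemma pairs_ok_oe_idx: "pairs_ok n i j = oe_idx n i j"
  unfolding pairs_ok_def oe_idx_def by auto

lemma pok_1k: "3 \<le> k \<Longrightarrow> k \<le> 2*n \<Longrightarrow> pairs_ok n 1 k"
  unfolding pairs_ok_def using sigma_ge3[of k] by auto

lemma pok_k1: "3 \<le> k \<Longrightarrow> k \<le> 2*n \<Longrightarrow> pairs_ok n k 1"
  unfolding pairs_ok_def by auto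

lemma pok_kl: "3 \<le> k \<Longrightarrow> k \<le> 2*n \<Longrightarrow> 3 \<le> l \<Longrightarrow> l \<le> 2*n \<Longrightarrow> k \<noteq> l \<Longrightarrow> k \<noteq> sigma l \<Longrightarrow> pairs_ok n k l"
  unfolding pairs_ok_def by auto

lemma mlp_Cons: "mat_list_prod n (A # As) = A * mat_list_prod n As"
  unfolding mat_list_prod_def by simp

lemma mlp_Nil: "mat_list_prod n [] = 1\<^sub>m (2*n)"
  unfolding mat_list_prod_def by simp

lemma mlp_carrier: "(\<And>A. A \<in> set As \<Longrightarrow> A \<in> carrier_mat (2*n) (2*n)) \<Longrightarrow>
  mat_list_prod n As \<in> carrier_mat (2*n) (2*n)"
proof (induction As)
  case (Cons a As)
  then have "a \<in> carrier_mat (2*n) (2*n)" "mat_list_prod n As \<in> carrier_mat (2*n) (2*n)" by auto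
  then show ?case by (simp add: mlp_Cons)
qed (simp add: mlp_Nil)

lemma mlp_append: "(\<And>A. A \<in> set (As @ Bs) \<Longrightarrow> A \<in> carrier_mat (2*n) (2*n)) \<Longrightarrow>
  mat_list_prod n (As @ Bs) = mat_list_prod n As * mat_list_prod n Bs"
proof (induction As)
  case Nil then show ?case
    using mlp_carrier[of Bs n] by (simp add: mlp_Nil)
next
  case (Cons A As)
  then show ?case using mlp_carrier[of As n] mlp_carrier[of Bs n]
    by (simp add: mlp_Cons assoc_mult_mat[of A "2*n" "2*n" _ "2*n" _ "2*n"])
qed

definition goodl :: "nat \<Rightarrow> 'a::comm_ring_1 set \<Rightarrow> (nat \<times> nat \<times> 'a poly poly) list \<Rightarrow> bool" where
  "goodl n I hs \<longleftrightarrow> (\<forall>(it, jt, h) \<in> set hs. oe_idx n it jt \<and> ((it = 1) \<or> (jt = 1 \<and> h \<in> poly_ideal2 I)))"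

definition inP :: "nat \<Rightarrow> 'a::comm_ring_1 set \<Rightarrow> 'a poly poly \<Rightarrow> 'a poly poly mat \<Rightarrow> bool" where
  "inP n I T M \<longleftrightarrow> (\<exists>hs. goodl n I hs \<and> M = mat_list_prod n (map (\<lambda>(it, jt, h). oe n it jt (T * h)) hs))"

lemma inP_carrier: "inP n I T M \<Longrightarrow> M \<in> carrier_mat (2*n) (2*n)"
  unfolding inP_def by (auto intro!: mlp_carrier)

lemma inP_one: "inP n I T (1\<^sub>m (2*n))"
  unfolding inP_def goodl_def by (rule exI[of _ "[]"]) (simp add: mlp_Nil)

lemma inP_mult: assumes "inP n I T A" "inP n I T B" shows "inP n I T (A * B)"
proof -
  obtain hs gs where h: "goodl n I hs" "A = mat_list_prod n (map (\<lambda>(it, jt, h). oe n it jt (T * h)) hs)"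
    and g: "goodl n I gs" "B = mat_list_prod n (map (\<lambda>(it, jt, h). oe n it jt (T * h)) gs)"
    using assms unfolding inP_def by blast
  show ?thesis unfolding inP_def
    apply (rule exI[of _ "hs @ gs"])
    using h g by (auto simp: goodl_def intro!: mlp_append[symmetric])
qed

lemma inP_gen: assumes "oe_idx n i j" "i = 1 \<or> (j = 1 \<and> h \<in> poly_ideal2 I)"
  shows "inP n I T (oe n i j (T * h))"
  unfolding inP_def
  apply (rule exI[of _ "[(i,j,h)]"])
  using assms by (auto simp: goodl_def mlp_Cons mlp_Nil)

lemma inP_g1: "3 \<le> q \<Longrightarrow> q \<le> 2*n \<Longrightarrow> z = T * h \<Longrightarrow> inP n I T (oe n 1 q z)"
  using inP_gen[of n 1 q h I T] pok_1k[of q n] by (simp add: pairs_ok_oe_idx)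

lemma inP_g2: "3 \<le> p \<Longrightarrow> p \<le> 2*n \<Longrightarrow> h \<in> poly_ideal2 I \<Longrightarrow> z = T * h \<Longrightarrow> inP n I T (oe n p 1 z)"
  using inP_gen[of n p 1 h I T] pok_k1[of p n] by (simp add: pairs_ok_oe_idx)

lemma ideal_sum: assumes "is_ideal I" "\<And>x. x \<in> A \<Longrightarrow> f x \<in> I" shows "sum f A \<in> I"
proof (cases "finite A")
  case True then show ?thesis using assms(2)
    by (induction A rule: finite_induct) (use assms(1) in \<open>auto simp: is_ideal_def\<close>)
qed (use assms in \<open>auto simp: is_ideal_def\<close>)

lemma ideal_mult: "is_ideal I \<Longrightarrow> x \<in> I \<Longrightarrow> a * x \<in> I"
  unfolding is_ideal_def by auto

lemma ideal_mult2: "is_ideal I \<Longrightarrow> x \<in> I \<Longrightarrow> x * a \<in> I"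
  unfolding is_ideal_def by (metis mult.commute)

lemma p1_mult: assumes "is_ideal I" "q \<in> poly_ideal1 I" shows "p * q \<in> poly_ideal1 I"
  using assms by (auto simp: poly_ideal1_def coeff_mult intro!: ideal_sum ideal_mult)

lemma p1_sum: assumes "is_ideal I" "\<And>x. x \<in> A \<Longrightarrow> f x \<in> poly_ideal1 I" shows "sum f A \<in> poly_ideal1 I"
  using assms by (auto simp: poly_ideal1_def coeff_sum intro!: ideal_sum)

lemma p2_alt: "h \<in> poly_ideal2 I \<longleftrightarrow> (\<forall>k. coeff h k \<in> poly_ideal1 I)"
  unfolding poly_ideal1_def poly_ideal2_def by auto

lemma p2_mult: assumes "is_ideal I" "h \<in> poly_ideal2 I" shows "g * h \<in> poly_ideal2 I"
  using assms unfolding p2_alt by (auto simp: coeff_mult intro!: p1_sum p1_mult)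

lemma p2_mult2: assumes "is_ideal I" "h \<in> poly_ideal2 I" shows "h * g \<in> poly_ideal2 I"
  using p2_mult[OF assms, of g] by (simp add: mult.commute)

lemma p2_sum: assumes "is_ideal I" "\<And>x. x \<in> A \<Longrightarrow> f x \<in> poly_ideal2 I" shows "sum f A \<in> poly_ideal2 I"
  using assms unfolding p2_alt by (auto simp: coeff_sum intro!: p1_sum)

lemma p2_uminus: assumes "is_ideal I" "h \<in> poly_ideal2 I" shows "- h \<in> poly_ideal2 I"
  using p2_mult[OF assms, of "-1"] by simp

lemma p2_const: assumes "is_ideal I" "x \<in> I" shows "constXY x \<in> poly_ideal2 I"
  using assms unfolding poly_ideal2_def constXY_def is_ideal_def
  by (auto simp: coeff_pCons split: nat.splits)

lemma p2_subst: assumes "is_ideal I" "f \<in> poly_ideal1 I" shows "subst_XY f t \<in> poly_ideal2 I"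
proof -
  have c0: "constXY (0::'a) = 0" unfolding constXY_def by simp
  show ?thesis
    unfolding subst_XY_def poly_altdef
    apply (rule p2_sum[OF assms(1)])
    apply (subst coeff_map_poly)
     apply (rule c0)
    apply (rule p2_mult2[OF assms(1)])
    apply (rule p2_const[OF assms(1)])
    using assms(2) unfolding poly_ideal1_def by auto
qed

lemma oe_cancel1: "pairs_ok n i j \<Longrightarrow> M \<in> carrier_mat (2*n) (2*n) \<Longrightarrow> oe n i j (-s) * (oe n i j s * M) = M"
  using oe_inv[of n i j "-s"] assoc_mult_mat[of "oe n i j (-s)" "2*n" "2*n" "oe n i j s" "2*n" M "2*n"]
  by simp

lemma oe_cancel2: "pairs_ok n i j \<Longrightarrow> M \<in> carrier_mat (2*n) (2*n) \<Longrightarrow> oe n i j s * (oe n i j (-s) * M) = M"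
  using oe_inv[of n i j "s"] assoc_mult_mat[of "oe n i j s" "2*n" "2*n" "oe n i j (-s)" "2*n" M "2*n"]
  by simp

lemma oe_inv2: "pairs_ok n i j \<Longrightarrow> oe n i j (-s) * oe n i j s = 1\<^sub>m (2*n)"
  using oe_inv[of n i j "-s"] by simp

lemma inP_mid:
  assumes "3 \<le> p" "p \<le> 2*n" "3 \<le> k" "k \<le> 2*n" "p \<noteq> k" "p \<noteq> sigma k" "c \<in> poly_ideal2 I"
    and "z = T * T * c" and I: "is_ideal I"
  shows "inP n I T (oe n p k z)"
proof -
  have pk: "pairs_ok n p 1" "pairs_ok n 1 k" "pairs_ok n p k"
    using assms pok_1k pok_k1 pok_kl by auto
  have "oe n p k z = oe n p 1 (T*c) * oe n 1 k T * oe n p 1 (-(T*c)) * oe n 1 k (-T)"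
    using oe_comm_lem[OF pk, of "T*c" T] assms(8) by (simp add: algebra_simps)
  also have "inP n I T \<dots>"
    apply (intro inP_mult)
       apply (rule inP_g2[of p n c]; use assms in simp)
      apply (rule inP_g1[of k n _ T 1]; use assms in simp)
     apply (rule inP_g2[of p n "-c"]; use assms p2_uminus[OF I] in simp)
    apply (rule inP_g1[of k n _ T "-1"]; use assms in simp)
    done
  finally show ?thesis .
qed

lemma inP_g2x: "3 \<le> p \<Longrightarrow> p \<le> 2*n \<Longrightarrow> is_ideal I \<Longrightarrow> h \<in> poly_ideal2 I \<Longrightarrow> z = T * (x * h) \<Longrightarrow> inP n I T (oe n p 1 z)"
  by (rule inP_g2[of p n "x*h"]) (auto intro: p2_mult)

lemma exists_l:
  assumes "3 \<le> n" "3 \<le> k" "k \<le> 2*n"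
  shows "\<exists>l. 3 \<le> l \<and> l \<le> 2*n \<and> l \<noteq> k \<and> l \<noteq> sigma k"
proof (cases "k \<le> 4")
  case True
  then show ?thesis using assms by (intro exI[of _ 5]) (auto simp: sigma_def)
next
  case False
  then show ?thesis using assms by (intro exI[of _ 3]) (auto simp: sigma_def)
qed

lemma T4: "(T::'b::comm_ring_1)^4 = T*T*T*T"
  by (simp add: eval_nat_numeral algebra_simps)

lemma case_C2:
  fixes a h T :: "'a::comm_ring_1 poly poly"
  assumes I: "is_ideal I" and n: "3 \<le> n" and k: "3 \<le> k" "k \<le> 2*n" and h: "h \<in> poly_ideal2 I"
  shows "inP n I T (oe n 1 k a * oe n k 1 (T^4*h) * oe n 1 k (-a))"
proof -
  obtain l where l: "3 \<le> l" "l \<le> 2*n" "l \<noteq> k" "l \<noteq> sigma k" using exists_l[OF n k] by blast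
  have ksl: "k \<noteq> sigma l" using l k sigma_sym[of k l] by auto
  have p: "pairs_ok n 1 k" "pairs_ok n k 1" "pairs_ok n k l" "pairs_ok n l k" "pairs_ok n 1 l" "pairs_ok n l 1"
    using k l ksl pok_1k pok_k1 pok_kl by auto
  define u where "u = T*T"
  define v where "v = T*T*h"
  define s1 where "s1 = T*(h*a)"
  define t1 where "t1 = - T"
  have e1: "oe n k 1 (T^4*h) = oe n k l u * oe n l 1 v * oe n k l (-u) * oe n l 1 (-v)"
    using oe_comm_lem[OF p(3) p(6) p(2), of u v] by (simp add: u_def v_def T4 algebra_simps)
  have e2: "oe n 1 k a * (oe n k l u * oe n l 1 v * oe n k l (-u) * oe n l 1 (-v)) * oe n 1 k (-a)
     = (oe n 1 k a * oe n k l u * oe n 1 k (-a)) * (oe n 1 k a * oe n l 1 v * oe n 1 k (-a))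
      * (oe n 1 k a * oe n k l (-u) * oe n 1 k (-a)) * (oe n 1 k a * oe n l 1 (-v) * oe n 1 k (-a))"
    using p by (simp add: oe_assoc oe_cancel1)
  have e3: "oe n 1 k a * oe n k l u * oe n 1 k (-a) = oe n k l u * oe n 1 l (a*u)"
    by (rule oe_chev[OF p(1) p(3) p(5)])
  have e4: "oe n 1 k a * oe n l 1 v * oe n 1 k (-a) = oe n l 1 v * oe n l k (-(v*a))"
    by (rule oe_chev2[OF p(6) p(1) p(4)])
  have e5: "oe n 1 k a * oe n k l (-u) * oe n 1 k (-a) = oe n k l (-u) * oe n 1 l (a*(-u))"
    by (rule oe_chev[OF p(1) p(3) p(5)])
  have e6: "oe n 1 k a * oe n l 1 (-v) * oe n 1 k (-a) = oe n l 1 (-v) * oe n l k (-((-v)*a))"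
    by (rule oe_chev2[OF p(6) p(1) p(4)])
  have e7: "oe n l k (-(v*a)) = oe n l 1 s1 * oe n 1 k t1 * oe n l 1 (-s1) * oe n 1 k (-t1)"
    using oe_comm_lem[OF p(6) p(1) p(4), of s1 t1] by (simp add: s1_def t1_def v_def algebra_simps)
  have e8: "oe n k l u * oe n 1 l (a*u) * (oe n l 1 v * (oe n l 1 s1 * oe n 1 k t1 * oe n l 1 (-s1) * oe n 1 k (-t1)))
     * (oe n k l (-u) * oe n 1 l (a*(-u))) * (oe n l 1 (-v) * oe n l k (-((-v)*a)))
     = ((oe n k l u * oe n 1 l (a*u) * oe n k l (-u)) * (oe n k l u * oe n l 1 v * oe n k l (-u))
        * (oe n k l u * oe n l 1 s1 * oe n k l (-u)) * (oe n k l u * oe n 1 k t1 * oe n k l (-u))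
        * (oe n k l u * oe n l 1 (-s1) * oe n k l (-u)) * (oe n k l u * oe n 1 k (-t1) * oe n k l (-u)))
       * (oe n 1 l (a*(-u)) * oe n l 1 (-v) * oe n l k (-((-v)*a)))"
    using p by (simp add: oe_assoc oe_cancel1)
  have f1: "oe n k l u * oe n 1 l (a*u) * oe n k l (-u) = oe n 1 l (a*u)"
    by (rule comm_c4[OF p(3) p(5) p(1)])
  have f2: "oe n k l u * oe n l 1 w * oe n k l (-u) = oe n l 1 w * oe n k 1 (u*w)" for w
    by (rule oe_chev[OF p(3) p(6) p(2)])
  have f3: "oe n k l u * oe n 1 k w * oe n k l (-u) = oe n 1 k w * oe n 1 l (-(w*u))" for w
    by (rule oe_chev2[OF p(1) p(3) p(5)])
  have hI: "h * x \<in> poly_ideal2 I" "x * h \<in> poly_ideal2 I" for x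
    using p2_mult2[OF I h] p2_mult[OF I h] by auto
  have "oe n 1 k a * oe n k 1 (T^4*h) * oe n 1 k (-a) = 
     oe n 1 k a * (oe n k l u * oe n l 1 v * oe n k l (-u) * oe n l 1 (-v)) * oe n 1 k (-a)"
    by (simp only: e1)
  also have "\<dots> = (oe n 1 k a * oe n k l u * oe n 1 k (-a)) * (oe n 1 k a * oe n l 1 v * oe n 1 k (-a))
      * (oe n 1 k a * oe n k l (-u) * oe n 1 k (-a)) * (oe n 1 k a * oe n l 1 (-v) * oe n 1 k (-a))"
    by (rule e2)
  also have "\<dots> = (oe n k l u * oe n 1 l (a*u)) * (oe n l 1 v * oe n l k (-(v*a)))
      * (oe n k l (-u) * oe n 1 l (a*(-u))) * (oe n l 1 (-v) * oe n l k (-((-v)*a)))"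
    by (simp only: e3 e4 e5 e6)
  also have "\<dots> = oe n k l u * oe n 1 l (a*u) * (oe n l 1 v * (oe n l 1 s1 * oe n 1 k t1 * oe n l 1 (-s1) * oe n 1 k (-t1)))
     * (oe n k l (-u) * oe n 1 l (a*(-u))) * (oe n l 1 (-v) * oe n l k (-((-v)*a)))"
    by (simp only: e7)
  also have "\<dots> = ((oe n k l u * oe n 1 l (a*u) * oe n k l (-u)) * (oe n k l u * oe n l 1 v * oe n k l (-u))
        * (oe n k l u * oe n l 1 s1 * oe n k l (-u)) * (oe n k l u * oe n 1 k t1 * oe n k l (-u))
        * (oe n k l u * oe n l 1 (-s1) * oe n k l (-u)) * (oe n k l u * oe n 1 k (-t1) * oe n k l (-u)))
       * (oe n 1 l (a*(-u)) * oe n l 1 (-v) * oe n l k (-((-v)*a)))"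
    by (rule e8)
  also have "\<dots> = ((oe n 1 l (a*u)) * (oe n l 1 v * oe n k 1 (u*v))
        * (oe n l 1 s1 * oe n k 1 (u*s1)) * (oe n 1 k t1 * oe n 1 l (-(t1*u)))
        * (oe n l 1 (-s1) * oe n k 1 (u*(-s1))) * (oe n 1 k (-t1) * oe n 1 l (-((-t1)*u))))
       * (oe n 1 l (a*(-u)) * oe n l 1 (-v) * oe n l k (-((-v)*a)))"
    by (simp only: f1 f2 f3)
  also have "inP n I T \<dots>"
    apply (intro inP_mult)
    apply (rule inP_g1[of l n _ T "a*T"]; use l in \<open>simp add: u_def\<close>)
    apply (rule inP_g2x[OF l(1,2) I h, of _ T T]; simp add: v_def)
    apply (rule inP_g2x[OF k I h, of _ T "T*T*T"]; simp add: u_def v_def algebra_simps)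
    apply (rule inP_g2x[OF l(1,2) I h, of _ T a]; simp add: s1_def algebra_simps)
    apply (rule inP_g2x[OF k I h, of _ T "T*T*a"]; simp add: u_def s1_def algebra_simps)
    apply (rule inP_g1[of k n _ T "-1"]; use k in \<open>simp add: t1_def\<close>)
    apply (rule inP_g1[of l n _ T "T*T"]; use l in \<open>simp add: t1_def u_def\<close>)
    apply (rule inP_g2x[OF l(1,2) I h, of _ T "-a"]; simp add: s1_def algebra_simps)
    apply (rule inP_g2x[OF k I h, of _ T "-(T*T*a)"]; simp add: u_def s1_def algebra_simps)
    apply (rule inP_g1[of k n _ T "1"]; use k in \<open>simp add: t1_def\<close>)
    apply (rule inP_g1[of l n _ T "-(T*T)"]; use l in \<open>simp add: t1_def u_def\<close>)
    apply (rule inP_g1[of l n _ T "-(a*T)"]; use l in \<open>simp add: u_def\<close>)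
    apply (rule inP_g2x[OF l(1,2) I h, of _ T "-T"]; simp add: v_def)
    apply (rule inP_mid[of l n k "a*h"]; use l k p2_mult[OF I h] I in \<open>simp add: v_def algebra_simps\<close>)
    done
  finally show ?thesis .
qed

lemma case_D2:
  fixes x h T :: "'a::comm_ring_1 poly poly"
  assumes I: "is_ideal I" and n: "3 \<le> n" and k: "3 \<le> k" "k \<le> 2*n" and x: "x \<in> poly_ideal2 I"
  shows "inP n I T (oe n k 1 x * oe n 1 k (T^4*h) * oe n k 1 (-x))"
proof -
  obtain l where l: "3 \<le> l" "l \<le> 2*n" "l \<noteq> k" "l \<noteq> sigma k" using exists_l[OF n k] by blast
  have ksl: "k \<noteq> sigma l" using l k sigma_sym[of k l] by auto
  have p: "pairs_ok n 1 k" "pairs_ok n k 1" "pairs_ok n k l" "pairs_ok n l k" "pairs_ok n 1 l" "pairs_ok n l 1"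
    using k l ksl pok_1k pok_k1 pok_kl by auto
  define u where "u = T*T"
  define v where "v = T*T*h"
  define s2 where "s2 = T*x"
  define t2 where "t2 = - T"
  have e1: "oe n 1 k (T^4*h) = oe n 1 l u * oe n l k v * oe n 1 l (-u) * oe n l k (-v)"
    using oe_comm_lem[OF p(5) p(4) p(1), of u v] by (simp add: u_def v_def T4 algebra_simps)
  have e2: "oe n k 1 x * (oe n 1 l u * oe n l k v * oe n 1 l (-u) * oe n l k (-v)) * oe n k 1 (-x)
     = (oe n k 1 x * oe n 1 l u * oe n k 1 (-x)) * (oe n k 1 x * oe n l k v * oe n k 1 (-x))
      * (oe n k 1 x * oe n 1 l (-u) * oe n k 1 (-x)) * (oe n k 1 x * oe n l k (-v) * oe n k 1 (-x))"
    using p by (simp add: oe_assoc oe_cancel1)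
  have e3: "oe n k 1 x * oe n 1 l w * oe n k 1 (-x) = oe n 1 l w * oe n k l (x*w)" for w
    by (rule oe_chev[OF p(2) p(5) p(3)])
  have e4: "oe n k 1 x * oe n l k w * oe n k 1 (-x) = oe n l k w * oe n l 1 (-(w*x))" for w
    by (rule oe_chev2[OF p(4) p(2) p(6)])
  have e7: "oe n k l (x*(-u)) = oe n k 1 s2 * oe n 1 l t2 * oe n k 1 (-s2) * oe n 1 l (-t2)"
    using oe_comm_lem[OF p(2) p(5) p(3), of s2 t2] by (simp add: s2_def t2_def u_def algebra_simps)
  have e8: "oe n 1 l u * oe n k l (x*u) * (oe n l k v * oe n l 1 (-(v*x)))
      * (oe n 1 l (-u) * (oe n k 1 s2 * oe n 1 l t2 * oe n k 1 (-s2) * oe n 1 l (-t2)))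
      * (oe n l k (-v) * oe n l 1 (-((-v)*x)))
     = (oe n 1 l u * oe n k l (x*u)) *
       ((oe n l k v * oe n l 1 (-(v*x)) * oe n l k (-v)) * (oe n l k v * oe n 1 l (-u) * oe n l k (-v))
        * (oe n l k v * oe n k 1 s2 * oe n l k (-v)) * (oe n l k v * oe n 1 l t2 * oe n l k (-v))
        * (oe n l k v * oe n k 1 (-s2) * oe n l k (-v)) * (oe n l k v * oe n 1 l (-t2) * oe n l k (-v)))
       * oe n l 1 (-((-v)*x))"
    using p by (simp add: oe_assoc oe_cancel1)
  have f1: "oe n l k v * oe n l 1 w * oe n l k (-v) = oe n l 1 w" for w
    by (rule comm_c5[OF p(4) p(6) p(2)])
  have f2: "oe n l k v * oe n 1 l w * oe n l k (-v) = oe n 1 l w * oe n 1 k (-(w*v))" for w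
    by (rule oe_chev2[OF p(5) p(4) p(1)])
  have f3: "oe n l k v * oe n k 1 w * oe n l k (-v) = oe n k 1 w * oe n l 1 (v*w)" for w
    by (rule oe_chev[OF p(4) p(2) p(6)])
  have "oe n k 1 x * oe n 1 k (T^4*h) * oe n k 1 (-x) =
     oe n k 1 x * (oe n 1 l u * oe n l k v * oe n 1 l (-u) * oe n l k (-v)) * oe n k 1 (-x)"
    by (simp only: e1)
  also have "\<dots> = (oe n k 1 x * oe n 1 l u * oe n k 1 (-x)) * (oe n k 1 x * oe n l k v * oe n k 1 (-x))
      * (oe n k 1 x * oe n 1 l (-u) * oe n k 1 (-x)) * (oe n k 1 x * oe n l k (-v) * oe n k 1 (-x))"
    by (rule e2)
  also have "\<dots> = (oe n 1 l u * oe n k l (x*u)) * (oe n l k v * oe n l 1 (-(v*x)))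
      * (oe n 1 l (-u) * oe n k l (x*(-u))) * (oe n l k (-v) * oe n l 1 (-((-v)*x)))"
    by (simp only: e3 e4)
  also have "\<dots> = oe n 1 l u * oe n k l (x*u) * (oe n l k v * oe n l 1 (-(v*x)))
      * (oe n 1 l (-u) * (oe n k 1 s2 * oe n 1 l t2 * oe n k 1 (-s2) * oe n 1 l (-t2)))
      * (oe n l k (-v) * oe n l 1 (-((-v)*x)))"
    by (simp only: e7)
  also have "\<dots> = (oe n 1 l u * oe n k l (x*u)) *
       ((oe n l k v * oe n l 1 (-(v*x)) * oe n l k (-v)) * (oe n l k v * oe n 1 l (-u) * oe n l k (-v))
        * (oe n l k v * oe n k 1 s2 * oe n l k (-v)) * (oe n l k v * oe n 1 l t2 * oe n l k (-v))
        * (oe n l k v * oe n k 1 (-s2) * oe n l k (-v)) * (oe n l k v * oe n 1 l (-t2) * oe n l k (-v)))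
       * oe n l 1 (-((-v)*x))"
    by (rule e8)
  also have "\<dots> = (oe n 1 l u * oe n k l (x*u)) *
       ((oe n l 1 (-(v*x))) * (oe n 1 l (-u) * oe n 1 k (-((-u)*v)))
        * (oe n k 1 s2 * oe n l 1 (v*s2)) * (oe n 1 l t2 * oe n 1 k (-(t2*v)))
        * (oe n k 1 (-s2) * oe n l 1 (v*(-s2))) * (oe n 1 l (-t2) * oe n 1 k (-((-t2)*v))))
       * oe n l 1 (-((-v)*x))"
    by (simp only: f1 f2 f3)
  also have "inP n I T \<dots>"
    apply (intro inP_mult)
    apply (rule inP_g1[of l n _ T T]; use l in \<open>simp add: u_def\<close>)
    apply (rule inP_mid[of k n l x]; use l k x I ksl in \<open>simp add: u_def algebra_simps\<close>)
    apply (rule inP_g2x[OF l(1,2) I x, of _ T "-(T*h)"]; simp add: v_def algebra_simps)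
    apply (rule inP_g1[of l n _ T "-T"]; use l in \<open>simp add: u_def\<close>)
    apply (rule inP_g1[of k n _ T "T*T*T*h"]; use k in \<open>simp add: u_def v_def algebra_simps\<close>)
    apply (rule inP_g2x[OF k I x, of _ T 1]; simp add: s2_def)
    apply (rule inP_g2x[OF l(1,2) I x, of _ T "T*T*h"]; simp add: v_def s2_def algebra_simps)
    apply (rule inP_g1[of l n _ T "-1"]; use l in \<open>simp add: t2_def\<close>)
    apply (rule inP_g1[of k n _ T "T*T*h"]; use k in \<open>simp add: t2_def v_def algebra_simps\<close>)
    apply (rule inP_g2x[OF k I x, of _ T "-1"]; simp add: s2_def)
    apply (rule inP_g2x[OF l(1,2) I x, of _ T "-(T*T*h)"]; simp add: v_def s2_def algebra_simps)
    apply (rule inP_g1[of l n _ T "1"]; use l in \<open>simp add: t2_def\<close>)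
    apply (rule inP_g1[of k n _ T "-(T*T*h)"]; use k in \<open>simp add: t2_def v_def algebra_simps\<close>)
    apply (rule inP_g2x[OF l(1,2) I x, of _ T "T*h"]; simp add: v_def algebra_simps)
    done
  finally show ?thesis .
qed

lemma conj_gen:
  fixes T h :: "'a::comm_ring_1 poly poly"
  assumes I: "is_ideal I" and n: "3 \<le> n" and c: "EO1_gen n I (c1, c2, z0)"
    and g: "oe_idx n p q" and gp: "p = 1 \<or> (q = 1 \<and> h \<in> poly_ideal2 I)"
  shows "inP n I T (oe n c1 c2 (constXY z0) * oe n p q (T^4*h) * oe n c1 c2 (-constXY z0))"
proof -
  define a where "a = constXY z0"
  have T4h: "T^4*h = T * (T*T*T*h)" by (simp add: T4 algebra_simps)
  have gcases: "(p = 1 \<and> 3 \<le> q \<and> q \<le> 2*n) \<or> (q = 1 \<and> 3 \<le> p \<and> p \<le> 2*n \<and> h \<in> poly_ideal2 I)"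
  proof -
    have "p = 1 \<Longrightarrow> q \<noteq> 2" using g unfolding oe_idx_def by auto
    moreover have "q = 1 \<Longrightarrow> p \<noteq> 2" using g unfolding oe_idx_def by auto
    ultimately show ?thesis using g gp unfolding oe_idx_def by auto
  qed
  have ccases: "(c1 = 1 \<and> 3 \<le> c2 \<and> c2 \<le> 2*n) \<or> (c2 = 1 \<and> 3 \<le> c1 \<and> c1 \<le> 2*n \<and> a \<in> poly_ideal2 I)"
    using c p2_const[OF I, of z0] unfolding EO1_gen_def a_def by auto
  show ?thesis
    unfolding a_def[symmetric]
    using ccases
  proof (elim disjE conjE)
    assume c1: "c1 = 1" and k: "3 \<le> c2" "c2 \<le> 2*n"
    show "inP n I T (oe n c1 c2 a * oe n p q (T^4*h) * oe n c1 c2 (-a))"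
      using gcases
    proof (elim disjE conjE)
      assume p1: "p = 1" and q: "3 \<le> q" "q \<le> 2*n"
      have "oe n 1 c2 a * oe n 1 q (T^4*h) * oe n 1 c2 (-a) = oe n 1 q (T^4*h)"
        by (rule comm_c1[OF pok_1k[OF k] pok_1k[OF q]])
      then show ?thesis using c1 p1 inP_g1[OF q T4h] by simp
    next
      assume q1: "q = 1" and pp: "3 \<le> p" "p \<le> 2*n" and h: "h \<in> poly_ideal2 I"
      consider (a) "p = sigma c2" | (b) "p = c2" | (c) "p \<noteq> sigma c2" "p \<noteq> c2" by blast
      then show ?thesis
      proof cases
        case a
        have "oe n 1 c2 a * oe n (sigma c2) 1 (T^4*h) * oe n 1 c2 (-a) = oe n (sigma c2) 1 (T^4*h)"
          using comm_c3[OF pok_1k[OF k] pok_k1[of "sigma c2" n]] pp a by simp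
        then show ?thesis using c1 q1 a inP_g2x[OF pp I h T4h] by simp
      next
        case b
        then show ?thesis using c1 q1 case_C2[OF I n k h] by simp
      next
        case cc: c
        have pk: "pairs_ok n p c2" using pok_kl[OF pp k] cc by auto
        have "oe n 1 c2 a * oe n p 1 (T^4*h) * oe n 1 c2 (-a) = oe n p 1 (T^4*h) * oe n p c2 (-((T^4*h)*a))"
          by (rule oe_chev2[OF pok_k1[OF pp] pok_1k[OF k] pk])
        moreover have "inP n I T (oe n p 1 (T^4*h) * oe n p c2 (-((T^4*h)*a)))"
          apply (rule inP_mult)
           apply (rule inP_g2x[OF pp I h T4h])
          apply (rule inP_mid[of p n c2 "-(T*T*a)*h"]; use pp k cc I p2_mult[OF I h, of "-(T*T*a)"] in \<open>simp add: T4 algebra_simps\<close>)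
          done
        ultimately show ?thesis using c1 q1 by simp
      qed
    qed
  next
    assume c2: "c2 = 1" and k: "3 \<le> c1" "c1 \<le> 2*n" and aI: "a \<in> poly_ideal2 I"
    show "inP n I T (oe n c1 c2 a * oe n p q (T^4*h) * oe n c1 c2 (-a))"
      using gcases
    proof (elim disjE conjE)
      assume p1: "p = 1" and q: "3 \<le> q" "q \<le> 2*n"
      consider (a) "q = sigma c1" | (b) "q = c1" | (c) "q \<noteq> sigma c1" "q \<noteq> c1" by blast
      then show ?thesis
      proof cases
        case a
        have sq: "sigma q = c1" using a k by simp
        have "oe n (sigma q) 1 a * oe n 1 q (T^4*h) * oe n (sigma q) 1 (-a) = oe n 1 q (T^4*h)"
          using comm_c3b[OF pok_1k[OF q] pok_k1[of "sigma q" n]] sq k by simp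
        then show ?thesis using c2 p1 sq inP_g1[OF q T4h] by simp
      next
        case b
        then show ?thesis using c2 p1 case_D2[OF I n k aI] by simp
      next
        case cc: c
        have ksq: "c1 \<noteq> sigma q" using cc k q sigma_sym[of c1 q] by auto
        have pk: "pairs_ok n c1 q" using pok_kl[OF k q] cc ksq by auto
        have "oe n c1 1 a * oe n 1 q (T^4*h) * oe n c1 1 (-a) = oe n 1 q (T^4*h) * oe n c1 q (a*(T^4*h))"
          by (rule oe_chev[OF pok_k1[OF k] pok_1k[OF q] pk])
        moreover have "inP n I T (oe n 1 q (T^4*h) * oe n c1 q (a*(T^4*h)))"
          apply (rule inP_mult)
           apply (rule inP_g1[OF q T4h])
          apply (rule inP_mid[of c1 n q "a*(T*T*h)"]; use q k cc ksq I p2_mult2[OF I aI, of "T*T*h"] in \<open>simp add: T4 algebra_simps\<close>)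
          done
        ultimately show ?thesis using c2 p1 by simp
      qed
    next
      assume q1: "q = 1" and pp: "3 \<le> p" "p \<le> 2*n" and h: "h \<in> poly_ideal2 I"
      have "oe n c1 1 a * oe n p 1 (T^4*h) * oe n c1 1 (-a) = oe n p 1 (T^4*h)"
        by (rule comm_c2[OF pok_k1[OF k] pok_k1[OF pp]])
      then show ?thesis using c2 q1 inP_g2x[OF pp I h T4h] by simp
    qed
  qed
qed

lemma EO1_pok: "EO1_gen n I (c1, c2, z0) \<Longrightarrow> pairs_ok n c1 c2"
  unfolding EO1_gen_def using pok_1k pok_k1 by auto

lemma inP_list_carrier: "mat_list_prod n (map (\<lambda>(it, jt, h). oe n it jt (T * h)) hs) \<in> carrier_mat (2*n) (2*n)"
  by (rule mlp_carrier) auto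

lemma conj_inP:
  fixes T :: "'a::comm_ring_1 poly poly"
  assumes I: "is_ideal I" and n: "3 \<le> n" and c: "EO1_gen n I (c1, c2, z0)"
    and M: "inP n I (T^4) M"
  shows "inP n I T (oe n c1 c2 (constXY z0) * M * oe n c1 c2 (-constXY z0))"
proof -
  have pc: "pairs_ok n c1 c2" by (rule EO1_pok[OF c])
  obtain hs where hs: "goodl n I hs" and Mhs: "M = mat_list_prod n (map (\<lambda>(it, jt, h). oe n it jt (T^4 * h)) hs)"
    using M unfolding inP_def by blast
  have "inP n I T (oe n c1 c2 (constXY z0) * mat_list_prod n (map (\<lambda>(it, jt, h). oe n it jt (T^4 * h)) hs) * oe n c1 c2 (-constXY z0))"
    using hs
  proof (induction hs)
    case Nil
    then show ?case using oe_inv[OF pc, of "constXY z0"] by (simp add: mlp_Nil inP_one)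
  next
    case (Cons x hs)
    obtain i j h where x: "x = (i, j, h)" by (cases x) auto
    have g: "oe_idx n i j" "i = 1 \<or> (j = 1 \<and> h \<in> poly_ideal2 I)" and gh: "goodl n I hs"
      using Cons.prems unfolding goodl_def x by auto
    let ?R = "mat_list_prod n (map (\<lambda>(it, jt, h). oe n it jt (T^4 * h)) hs)"
    have R: "?R \<in> carrier_mat (2*n) (2*n)" by (rule inP_list_carrier)
    have "oe n c1 c2 (constXY z0) * mat_list_prod n (map (\<lambda>(it, jt, h). oe n it jt (T^4 * h)) (x # hs)) * oe n c1 c2 (-constXY z0)
       = (oe n c1 c2 (constXY z0) * oe n i j (T^4*h) * oe n c1 c2 (-constXY z0)) * (oe n c1 c2 (constXY z0) * ?R * oe n c1 c2 (-constXY z0))"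
      using R pc by (simp add: x mlp_Cons oe_assoc oe_cancel1)
    also have "inP n I T \<dots>"
      by (rule inP_mult[OF conj_gen[OF I n c g] Cons.IH[OF gh]])
    finally show ?case .
  qed
  then show ?thesis using Mhs by simp
qed

definition Wm :: "nat \<Rightarrow> (nat \<times> nat \<times> 'a::comm_ring_1) list \<Rightarrow> 'a poly poly mat" where
  "Wm n gs = mat_list_prod n (map (\<lambda>(a, b, z). oe n a b (constXY z)) gs)"

definition Wi :: "nat \<Rightarrow> (nat \<times> nat \<times> 'a::comm_ring_1) list \<Rightarrow> 'a poly poly mat" where
  "Wi n gs = mat_list_prod n (rev (map (\<lambda>(a, b, z). oe n a b (- constXY z)) gs))"

lemma Wm_carrier: "Wm n gs \<in> carrier_mat (2*n) (2*n)"
  unfolding Wm_def by (rule mlp_carrier) auto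

lemma Wi_carrier: "Wi n gs \<in> carrier_mat (2*n) (2*n)"
  unfolding Wi_def by (rule mlp_carrier) auto

lemma Wm_Cons: "Wm n ((c1,c2,z) # gs) = oe n c1 c2 (constXY z) * Wm n gs"
  unfolding Wm_def by (simp add: mlp_Cons)

lemma Wi_Cons: "Wi n ((c1,c2,z) # gs) = Wi n gs * oe n c1 c2 (- constXY z)"
proof -
  have "Wi n ((c1,c2,z) # gs) = mat_list_prod n (rev (map (\<lambda>(a, b, z). oe n a b (- constXY z)) gs) @ [oe n c1 c2 (- constXY z)])"
    unfolding Wi_def by simp
  also have "\<dots> = Wi n gs * (oe n c1 c2 (- constXY z) * 1\<^sub>m (2*n))"
    unfolding Wi_def by (subst mlp_append) (auto simp: mlp_Cons mlp_Nil)
  finally show ?thesis by simp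
qed

lemma Wi_Wm: "\<forall>g\<in>set gs. EO1_gen n I g \<Longrightarrow> Wi n gs * Wm n gs = 1\<^sub>m (2*n)"
proof (induction gs)
  case Nil
  then show ?case by (simp add: Wi_def Wm_def mlp_Nil)
next
  case (Cons g gs)
  obtain c1 c2 z where g: "g = (c1, c2, z)" by (cases g) auto
  have pc: "pairs_ok n c1 c2" using EO1_pok Cons.prems g by auto
  have "Wi n (g # gs) * Wm n (g # gs) = Wi n gs * (oe n c1 c2 (- constXY z) * (oe n c1 c2 (constXY z) * Wm n gs))"
    unfolding g Wi_Cons Wm_Cons
    using Wi_carrier[of n gs] Wm_carrier[of n gs]
    by (simp add: assoc_mult_mat[of _ "2*n" "2*n" _ "2*n" _ "2*n"])
  also have "\<dots> = 1\<^sub>m (2*n)" using oe_cancel1[OF pc Wm_carrier[of n gs]] Cons by simp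
  finally show ?case .
qed

lemma main_ind:
  fixes T h :: "'a::comm_ring_1 poly poly"
  assumes I: "is_ideal I" and n: "3 \<le> n"
    and g: "oe_idx n i j" "i = 1 \<or> (j = 1 \<and> h \<in> poly_ideal2 I)"
  shows "\<forall>g\<in>set gs. EO1_gen n I g \<Longrightarrow> inP n I T (Wm n gs * oe n i j (T^(4^length gs) * h) * Wi n gs)"
proof (induction gs arbitrary: T)
  case Nil
  then show ?case using inP_gen[OF g, of T] by (simp add: Wm_def Wi_def mlp_Nil)
next
  case (Cons c gs)
  obtain c1 c2 z where c: "c = (c1, c2, z)" by (cases c) auto
  have cg: "EO1_gen n I (c1, c2, z)" using Cons.prems c by auto
  have IH: "inP n I (T^4) (Wm n gs * oe n i j ((T^4)^(4^length gs) * h) * Wi n gs)"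
    using Cons by auto
  have pw: "(T^4)^(4^length gs) = T^(4^length (c # gs))"
    by (simp add: power_mult[symmetric])
  have "Wm n (c # gs) * oe n i j (T^(4^length (c # gs)) * h) * Wi n (c # gs)
     = oe n c1 c2 (constXY z) * (Wm n gs * oe n i j ((T^4)^(4^length gs) * h) * Wi n gs) * oe n c1 c2 (- constXY z)"
    unfolding c Wm_Cons Wi_Cons pw[unfolded c]
    using Wi_carrier[of n gs] Wm_carrier[of n gs]
    by (simp add: assoc_mult_mat[of _ "2*n" "2*n" _ "2*n" _ "2*n"])
  also have "inP n I T \<dots>"
    by (rule conj_inP[OF I n cg IH])
  finally show ?case .
qed

theorem mainTheorem5:
  fixes n :: nat and I :: "'a::comm_ring_1 set"
    and gs :: "(nat \<times> nat \<times> 'a) list"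
    and i j :: nat and f :: "'a poly"
    and Einv :: "'a poly poly mat"
  assumes "n \<ge> 3"
    and "is_ideal I"
    and "\<forall>g\<in>set gs. EO1_gen n I g"
    and "(i = 1 \<and> 3 \<le> j \<and> j \<le> 2*n) \<or> (j = 1 \<and> 3 \<le> i \<and> i \<le> 2*n \<and> f \<in> poly_ideal1 I)"
    and "Einv \<in> carrier_mat (2*n) (2*n)"
    and "mat_list_prod n (map (\<lambda>(a, b, z). oe n a b (constXY z)) gs) * Einv = 1\<^sub>m (2*n)"
    and "Einv * mat_list_prod n (map (\<lambda>(a, b, z). oe n a b (constXY z)) gs) = 1\<^sub>m (2*n)"
  shows "\<exists>hs :: (nat \<times> nat \<times> 'a poly poly) list.
           (\<forall>(it, jt, h) \<in> set hs. oe_idx n it jt \<and>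
               ((it = 1) \<or> (jt = 1 \<and> h \<in> poly_ideal2 I))) \<and>
           mat_list_prod n (map (\<lambda>(a, b, z). oe n a b (constXY z)) gs)
             * oe n i j (varY ^ (4 ^ length gs) * varX * subst_XY f (varY ^ (4 ^ length gs) * varX))
             * Einv
           = mat_list_prod n (map (\<lambda>(it, jt, h). oe n it jt (varY * h)) hs)"
proof -
  note I = assms(2) and n = assms(1)
  let ?M = "mat_list_prod n (map (\<lambda>(a, b, z). oe n a b (constXY z)) gs)"
  have MW: "?M = Wm n gs" unfolding Wm_def by simp
  have WiE: "Einv = Wi n gs"
  proof -
    have "Einv = (Wi n gs * Wm n gs) * Einv" using Wi_Wm[OF assms(3)] assms(5) by simp
    also have "\<dots> = Wi n gs * (Wm n gs * Einv)"
      by (rule assoc_mult_mat[OF Wi_carrier Wm_carrier assms(5)])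
    also have "\<dots> = Wi n gs" using assms(6) MW Wi_carrier[of n gs] by simp
    finally show ?thesis .
  qed
  define h0 where "h0 = varX * subst_XY f (varY ^ (4 ^ length gs) * varX)"
  have coef: "varY ^ (4 ^ length gs) * varX * subst_XY f (varY ^ (4 ^ length gs) * varX) = varY ^ (4 ^ length gs) * h0"
    unfolding h0_def by (simp add: mult.assoc)
  have g: "oe_idx n i j" "i = 1 \<or> (j = 1 \<and> h0 \<in> poly_ideal2 I)"
  proof -
    from assms(4) show "oe_idx n i j"
      using pok_1k[of j n] pok_k1[of i n] by (auto simp: pairs_ok_oe_idx)
    from assms(4) show "i = 1 \<or> (j = 1 \<and> h0 \<in> poly_ideal2 I)"
      unfolding h0_def using p2_mult[OF I p2_subst[OF I]] by auto
  qed
  have "inP n I varY (Wm n gs * oe n i j (varY^(4^length gs) * h0) * Wi n gs)"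
    by (rule main_ind[OF I n g assms(3)])
  then obtain hs where hs: "goodl n I hs"
    and eq: "Wm n gs * oe n i j (varY^(4^length gs) * h0) * Wi n gs = mat_list_prod n (map (\<lambda>(it, jt, h). oe n it jt (varY * h)) hs)"
    unfolding inP_def by blast
  show ?thesis
    apply (rule exI[of _ hs])
    using hs eq unfolding goodl_def coef MW WiE by auto
qed

end
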